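(* Fix $\varepsilon_0>0$. There exists $C_0>0$ depending only on $a,b,\lambda,I_0,\varepsilon_0$ such that for every $\varepsilon\in[0,\varepsilon_0)$ and every solution $f_t$ of $\partial_tf=Q_\varepsilon[\mathscr J(f)]f$ with $f_0\in L^1(M)\cap\mathcal P(\mathbb R^2)$, $$\|f_t\|_{L^1(M)}\le\max(C_0,\|f_0\|_{L^1(M)})\quad\forall t\ge0.$$ Moreover, there exists $C_0'>0$ depending on $a,b,\lambda,I_0,\varepsilon_0$ and $\|f_0\|_{L^1(M)}$ such that $\sup_{t\ge0}|\mathscr J(f_t)|<C_0'$.
   Context: Fix real constants $a>0$, $b>0$, $\lambda$, $I_0$. $M=1+x^2/2+v^2/2$ on $\mathbb R^2$; $\|f\|_{L^1(M)}=\int|f|M$; $\mathcal P(\mathbb R^2)$ is the set of probability densities. $A=ax-bv$, $B(x,v;\varepsilon,j)=v(v-\lambda)(v-1)+x-\varepsilon(v-j)+I_0$, $\mathscr J(f)=\int vf\,dxdv$, $Q_\varepsilon[j]f=\partial_x(Af)+\partial_v(B(\cdot;\varepsilon,j)f)+\partial^2_{vv}f$. *)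

theory Defs
  imports "HOL-Analysis.Analysis"
begin

text \<open>Points of the phase space are pairs z = (x, v) :: real \<times> real.\<close>

definition Mw :: "real \<times> real \<Rightarrow> real" where
  "Mw z = 1 + (fst z)^2 / 2 + (snd z)^2 / 2"

definition L1M_norm :: "(real \<times> real \<Rightarrow> real) \<Rightarrow> real" where
  "L1M_norm g = (\<integral>z. \<bar>g z\<bar> * Mw z \<partial>lborel)"

definition in_L1M :: "(real \<times> real \<Rightarrow> real) \<Rightarrow> bool" where
  "in_L1M g \<longleftrightarrow> g \<in> borel_measurable lborel \<and> integrable lborel (\<lambda>z. \<bar>g z\<bar> * Mw z)"

definition prob_density :: "(real \<times> real \<Rightarrow> real) \<Rightarrow> bool" where
  "prob_density g \<longleftrightarrow> g \<in> borel_measurable lborel \<and> (\<forall>z. 0 \<le> g z)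
     \<and> integrable lborel g \<and> (\<integral>z. g z \<partial>lborel) = 1"

definition Jf :: "(real \<times> real \<Rightarrow> real) \<Rightarrow> real" where
  "Jf g = (\<integral>z. snd z * g z \<partial>lborel)"

definition Acoef :: "real \<Rightarrow> real \<Rightarrow> real \<times> real \<Rightarrow> real" where
  "Acoef a b z = a * fst z - b * snd z"

definition Bcoef :: "real \<Rightarrow> real \<Rightarrow> real \<Rightarrow> real \<Rightarrow> real \<times> real \<Rightarrow> real" where
  "Bcoef lam I0 eps j z =
     snd z * (snd z - lam) * (snd z - 1) + fst z - eps * (snd z - j) + I0"

definition test_fun :: "(real \<times> real \<Rightarrow> real) \<Rightarrow> (real \<times> real \<Rightarrow> real) \<Rightarrow>
    (real \<times> real \<Rightarrow> real) \<Rightarrow> (real \<times> real \<Rightarrow> real) \<Rightarrow> bool" where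
  "test_fun phi phix phiv phivv \<longleftrightarrow>
     (\<forall>z. (phi has_derivative (\<lambda>h. phix z * fst h + phiv z * snd h)) (at z))
   \<and> (\<forall>x v. ((\<lambda>w. phiv (x, w)) has_real_derivative phivv (x, v)) (at v))
   \<and> continuous_on UNIV phix \<and> continuous_on UNIV phiv \<and> continuous_on UNIV phivv
   \<and> compact (closure {z. phi z \<noteq> 0})"

text \<open>Weak solution of  d/dt f = Q_eps[J(f)] f  on [0,\<infinity>): each f t is a probability
  density, f is jointly measurable, has locally-in-time integrable moments of the order
  needed by the drift (1 + x^2 + v^4), and for every test function
  int phi f_t = int phi f_0 + int_0^t int f_s (-A phi_x - B(.;eps,J(f_s)) phi_v + phi_vv).\<close>

definition is_solution :: "real \<Rightarrow> real \<Rightarrow> real \<Rightarrow> real \<Rightarrow> real \<Rightarrow>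
    (real \<Rightarrow> real \<times> real \<Rightarrow> real) \<Rightarrow> bool" where
  "is_solution a b lam I0 eps f \<longleftrightarrow>
     (\<forall>t\<ge>0. prob_density (f t))
   \<and> (\<lambda>(s, z). f s z) \<in> borel_measurable (lborel :: (real \<times> (real \<times> real)) measure)
   \<and> (\<forall>T\<ge>0. set_integrable (lborel :: (real \<times> (real \<times> real)) measure) ({0..T} \<times> UNIV)
          (\<lambda>(s, z). (1 + (fst z)^2 + (snd z)^4) * f s z))
   \<and> (\<forall>phi phix phiv phivv. test_fun phi phix phiv phivv \<longrightarrow>
        (\<forall>t\<ge>0. (\<integral>z. phi z * f t z \<partial>lborel) =
            (\<integral>z. phi z * f 0 z \<partial>lborel)
          + (\<integral>s\<in>{0..t}. (\<integral>z. f s z * (- Acoef a b z * phix z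
                 - Bcoef lam I0 eps (Jf (f s)) z * phiv z + phivv z) \<partial>lborel) \<partial>lborel)))"

end

theory Submission
  imports Defs
begin


lemma deriv_glue:
  fixes g h :: "real \<Rightarrow> real"
  assumes g: "(g has_real_derivative D) (at c)" and h: "(h has_real_derivative D) (at c)"
    and e: "g c = h c"
  shows "((\<lambda>x. if x \<le> c then g x else h x) has_real_derivative D) (at c)"
proof -
  let ?f = "\<lambda>x. if x \<le> c then g x else h x"
  have G: "((\<lambda>y. (g y - g c) / (y - c)) \<longlongrightarrow> D) (at c)" using g by (simp add: has_field_derivative_iff)
  have H: "((\<lambda>y. (h y - h c) / (y - c)) \<longlongrightarrow> D) (at c)" using h by (simp add: has_field_derivative_iff)
  have "((\<lambda>y. (?f y - ?f c) / (y - c)) \<longlongrightarrow> D) (at_left c)"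
  proof (rule Lim_transform_eventually)
    show "((\<lambda>y. (g y - g c) / (y - c)) \<longlongrightarrow> D) (at_left c)"
      using G by (rule filterlim_mono) (auto simp: at_le)
    show "\<forall>\<^sub>F y in at_left c. (g y - g c) / (y - c) = (?f y - ?f c) / (y - c)"
      unfolding eventually_at_filter by auto
  qed
  moreover have "((\<lambda>y. (?f y - ?f c) / (y - c)) \<longlongrightarrow> D) (at_right c)"
  proof (rule Lim_transform_eventually)
    show "((\<lambda>y. (h y - h c) / (y - c)) \<longlongrightarrow> D) (at_right c)"
      using H by (rule filterlim_mono) (auto simp: at_le)
    show "\<forall>\<^sub>F y in at_right c. (h y - h c) / (y - c) = (?f y - ?f c) / (y - c)"
      using e unfolding eventually_at_filter by auto
  qed
  ultimately show ?thesis by (simp add: has_field_derivative_iff filterlim_split_at)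
qed

definition q0 :: "real \<Rightarrow> real" where "q0 u = 1 + u - 16*u^3 + 23*u^4 - 9*u^5"
definition q1 :: "real \<Rightarrow> real" where "q1 u = 1 - 48*u^2 + 92*u^3 - 45*u^4"
definition q2 :: "real \<Rightarrow> real" where "q2 u = - 96*u + 276*u^2 - 180*u^3"

definition p0 :: "real \<Rightarrow> real" where
  "p0 s = (if s \<le> 1 then s else if s \<le> 2 then q0 (s - 1) else 0)"
definition p1 :: "real \<Rightarrow> real" where
  "p1 s = (if s \<le> 1 then 1 else if s \<le> 2 then q1 (s - 1) else 0)"
definition p2 :: "real \<Rightarrow> real" where
  "p2 s = (if s \<le> 1 then 0 else if s \<le> 2 then q2 (s - 1) else 0)"

lemma q0_deriv: "((\<lambda>s. q0 (s - 1)) has_real_derivative q1 (s - 1)) (at s)"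
  unfolding q0_def q1_def by (auto intro!: derivative_eq_intros simp: algebra_simps power2_eq_square power3_eq_cube eval_nat_numeral)

lemma q1_deriv: "((\<lambda>s. q1 (s - 1)) has_real_derivative q2 (s - 1)) (at s)"
  unfolding q2_def q1_def by (auto intro!: derivative_eq_intros simp: algebra_simps power2_eq_square power3_eq_cube eval_nat_numeral)

lemma glue3:
  fixes A B C :: "real \<Rightarrow> real"
  assumes dA: "\<And>s. (A has_real_derivative A' s) (at s)"
    and dB: "\<And>s. (B has_real_derivative B' s) (at s)"
    and dC: "\<And>s. (C has_real_derivative C' s) (at s)"
    and e1: "A 1 = B 1" "A' 1 = B' 1" and e2: "B 2 = C 2" "B' 2 = C' 2"
  shows "((\<lambda>s. if s \<le> 1 then A s else if s \<le> 2 then B s else C s) has_real_derivative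
          (if s \<le> 1 then A' s else if s \<le> 2 then B' s else C' s)) (at s)"
proof -
  let ?F = "\<lambda>s. if s \<le> 1 then A s else if s \<le> 2 then B s else C s"
  consider "s < 1" | "s = 1" | "1 < s \<and> s < 2" | "s = 2" | "s > 2" by linarith
  then show ?thesis
  proof cases
    case 1
    have "(A has_real_derivative A' s) (at s)" by (rule dA)
    then have "(?F has_real_derivative A' s) (at s)"
      by (rule has_field_derivative_transform_within_open[where S="{..<1}"]) (use 1 in auto)
    then show ?thesis using 1 by simp
  next
    case 2
    have "((\<lambda>s. if s \<le> 1 then A s else B s) has_real_derivative A' 1) (at 1)"
      using dA[of 1] dB[of 1] e1 by (intro deriv_glue) auto
    then have "(?F has_real_derivative A' 1) (at 1)"
      by (rule has_field_derivative_transform_within_open[where S="{..<2}"]) auto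
    then show ?thesis using 2 by simp
  next
    case 3
    have "(B has_real_derivative B' s) (at s)" by (rule dB)
    then have "(?F has_real_derivative B' s) (at s)"
      by (rule has_field_derivative_transform_within_open[where S="{1<..<2}"]) (use 3 in auto)
    then show ?thesis using 3 by simp
  next
    case 4
    have "((\<lambda>s. if s \<le> 2 then B s else C s) has_real_derivative B' 2) (at 2)"
      using dB[of 2] dC[of 2] e2 by (intro deriv_glue) auto
    then have "(?F has_real_derivative B' 2) (at 2)"
      by (rule has_field_derivative_transform_within_open[where S="{1<..}"]) auto
    then show ?thesis using 4 by simp
  next
    case 5
    have "(C has_real_derivative C' s) (at s)" by (rule dC)
    then have "(?F has_real_derivative C' s) (at s)"
      by (rule has_field_derivative_transform_within_open[where S="{2<..}"]) (use 5 in auto)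
    then show ?thesis using 5 by simp
  qed
qed

lemma p0_deriv: "(p0 has_real_derivative p1 s) (at s)"
proof -
  have "((\<lambda>s. if s \<le> 1 then s else if s \<le> 2 then q0 (s - 1) else 0) has_real_derivative
          (if s \<le> 1 then 1 else if s \<le> 2 then q1 (s - 1) else 0)) (at s)"
    by (rule glue3[where A'="\<lambda>_. 1" and C'="\<lambda>_. 0"]) (auto intro!: derivative_eq_intros q0_deriv simp: q0_def q1_def)
  then show ?thesis unfolding p0_def[abs_def] p1_def .
qed

lemma p1_deriv: "(p1 has_real_derivative p2 s) (at s)"
proof -
  have "((\<lambda>s. if s \<le> 1 then 1 else if s \<le> 2 then q1 (s - 1) else 0) has_real_derivative
          (if s \<le> 1 then 0 else if s \<le> 2 then q2 (s - 1) else 0)) (at s)"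
    by (rule glue3[where A'="\<lambda>_. 0" and C'="\<lambda>_. 0"]) (auto intro!: derivative_eq_intros q1_deriv simp: q2_def q1_def)
  then show ?thesis unfolding p2_def[abs_def] p1_def .
qed

lemma p2_alt: "p2 s = q2 (min 1 (max 0 (s - 1)))"
  by (auto simp: p2_def q2_def min_def max_def)

lemma p2_cont: "continuous_on UNIV p2"
  unfolding p2_alt[abs_def] q2_def by (intro continuous_intros)

lemma p1_cont: "continuous_on UNIV p1"
  using p1_deriv by (meson DERIV_isCont continuous_at_imp_continuous_on)



lemma p1_chain[derivative_intros]:
  "(f has_real_derivative f') (at x within S) \<Longrightarrow> ((\<lambda>x. p1 (f x)) has_real_derivative p2 (f x) * f') (at x within S)"
  by (rule DERIV_chain2[OF p1_deriv])

lemma p0_nonneg: "0 \<le> s \<Longrightarrow> 0 \<le> p0 s"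
proof -
  assume s: "0 \<le> s"
  have "q0 u = (1 - u)^3 * (1 + 4*u + 9*u^2)" for u
    by (simp add: q0_def algebra_simps power2_eq_square power3_eq_cube eval_nat_numeral)
  moreover have "u \<le> 1 \<Longrightarrow> 0 \<le> (1 - u)^3 * (1 + 4*u + 9*u^2)" for u :: real
  proof -
    assume "u \<le> 1"
    moreover have "1 + 4*u + 9*u^2 = (3*u+2/3)^2 + 5/9"
      by (simp add: power2_eq_square algebra_simps)
    then have "0 \<le> 1 + 4*u + 9*u^2" by (metis add_nonneg_nonneg zero_le_power2 divide_nonneg_nonneg zero_le_numeral)
    ultimately show ?thesis by simp
  qed
  ultimately show ?thesis using s by (auto simp: p0_def)
qed

lemma p0_le: "0 \<le> s \<Longrightarrow> p0 s \<le> s"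
proof -
  assume s: "0 \<le> s"
  have "u \<ge> 0 \<Longrightarrow> q0 u \<le> 1 + u" for u :: real
  proof -
    assume u: "u \<ge> 0"
    have "q0 u = 1 + u - u^3 * (16 - 23*u + 9*u^2)"
      by (simp add: q0_def algebra_simps power2_eq_square power3_eq_cube eval_nat_numeral)
    moreover have "0 \<le> 16 - 23*u + 9*u^2" using zero_le_square[of "3*u - 23/6"]
      by (simp add: power2_eq_square algebra_simps)
    ultimately show ?thesis using u by simp
  qed
  from this[of "s - 1"] show ?thesis using s by (auto simp: p0_def)
qed

lemma p1_bound: "\<bar>p1 s\<bar> \<le> 186"
proof -
  have "0 \<le> u \<Longrightarrow> u \<le> 1 \<Longrightarrow> \<bar>q1 u\<bar> \<le> 186" for u :: real
  proof -
    assume u: "0 \<le> u" "u \<le> 1"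
    have "u^2 \<le> 1" "u^3 \<le> 1" "u^4 \<le> 1" "0 \<le> u^2" "0 \<le> u^3" "0 \<le> u^4"
      using u by (auto simp: power_le_one)
    then show ?thesis unfolding q1_def by linarith
  qed
  then show ?thesis by (auto simp: p1_def)
qed

lemma p2_bound: "\<bar>p2 s\<bar> \<le> 552"
proof -
  have "0 \<le> u \<Longrightarrow> u \<le> 1 \<Longrightarrow> \<bar>q2 u\<bar> \<le> 552" for u :: real
  proof -
    assume u: "0 \<le> u" "u \<le> 1"
    have "u^2 \<le> 1" "u^3 \<le> 1" "0 \<le> u^2" "0 \<le> u^3"
      using u by (auto simp: power_le_one)
    then show ?thesis unfolding q2_def using u by linarith
  qed
  then show ?thesis by (auto simp: p2_def)
qed

lemma p_small: "s \<le> 1 \<Longrightarrow> p0 s = s \<and> p1 s = 1 \<and> p2 s = 0"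
  by (auto simp: p0_def p1_def p2_def)

lemma p_large: "s > 2 \<Longrightarrow> p0 s = 0 \<and> p1 s = 0 \<and> p2 s = 0"
  by (auto simp: p0_def p1_def p2_def)

lemma Mw_deriv: "(Mw has_derivative (\<lambda>h. fst z * fst h + snd z * snd h)) (at z)"
proof -
  have "((\<lambda>z. 1 + (fst z)^2 / 2 + (snd z)^2 / 2) has_derivative
      (\<lambda>h. 0 + (2 * fst z * fst h) / 2 + (2 * snd z * snd h) / 2)) (at z)"
    by (auto intro!: derivative_eq_intros simp: fun_eq_iff)
  moreover have "(\<lambda>h. 0 + (2 * fst z * fst h) / 2 + (2 * snd z * snd h) / 2) = (\<lambda>h. fst z * fst h + snd z * snd h)"
    by auto
  ultimately show ?thesis unfolding Mw_def[abs_def] by simp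
qed

lemma Mw_ge: "Mw z \<ge> 1" "(fst z)^2 \<le> 2 * Mw z" "(snd z)^2 \<le> 2 * Mw z"
  by (auto simp: Mw_def)

lemma Mw_cont: "continuous_on UNIV Mw"
  unfolding Mw_def[abs_def] by (intro continuous_intros) auto

definition phiR :: "real \<Rightarrow> real \<times> real \<Rightarrow> real" where
  "phiR R z = R * p0 (Mw z / R)"
definition phiRx :: "real \<Rightarrow> real \<times> real \<Rightarrow> real" where
  "phiRx R z = p1 (Mw z / R) * fst z"
definition phiRv :: "real \<Rightarrow> real \<times> real \<Rightarrow> real" where
  "phiRv R z = p1 (Mw z / R) * snd z"
definition phiRvv :: "real \<Rightarrow> real \<times> real \<Rightarrow> real" where
  "phiRvv R z = p2 (Mw z / R) / R * (snd z)^2 + p1 (Mw z / R)"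

lemma Mw_level_compact: "compact {z. Mw z \<le> c}"
proof (rule compact_eq_bounded_closed[THEN iffD2], rule conjI)
  show "closed {z. Mw z \<le> c}"
    using Mw_cont by (intro closed_Collect_le) (auto intro: continuous_intros)
  show "bounded {z. Mw z \<le> c}"
    unfolding bounded_iff
  proof (intro exI[of _ "2 + 4 * \<bar>c\<bar>"] ballI)
    fix z :: "real \<times> real" assume "z \<in> {z. Mw z \<le> c}"
    then have c: "Mw z \<le> c" by simp
    have "norm z \<le> \<bar>fst z\<bar> + \<bar>snd z\<bar>"
      by (metis norm_Pair_le prod.collapse real_norm_def)
    moreover have yy: "\<bar>y\<bar> \<le> 1 + y^2" for y :: real
    proof -
      have "0 \<le> (\<bar>y\<bar> - 1/2)^2" by simp
      then show ?thesis by (simp add: power2_eq_square algebra_simps abs_mult_self_eq)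
    qed
    ultimately show "norm z \<le> 2 + 4 * \<bar>c\<bar>" using Mw_ge[of z] c yy[of "fst z"] yy[of "snd z"] by linarith
  qed
qed

lemma phiR_test: assumes R: "R > 0" shows "test_fun (phiR R) (phiRx R) (phiRv R) (phiRvv R)"
  unfolding test_fun_def
proof (intro conjI allI)
  fix z :: "real \<times> real"
  have "((\<lambda>z. Mw z / R) has_derivative (\<lambda>h. (fst z * fst h + snd z * snd h) / R)) (at z)"
    using Mw_deriv[of z] R by (auto intro!: derivative_eq_intros)
  from DERIV_compose_FDERIV[OF p0_deriv this]
  have "((\<lambda>z. p0 (Mw z / R)) has_derivative (\<lambda>h. (fst z * fst h + snd z * snd h) / R * p1 (Mw z / R))) (at z)" .
  then have "((\<lambda>z. R * p0 (Mw z / R)) has_derivative (\<lambda>h. R * ((fst z * fst h + snd z * snd h) / R * p1 (Mw z / R)))) (at z)"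
    by (rule has_derivative_mult_right)
  moreover have "(\<lambda>h. R * ((fst z * fst h + snd z * snd h) / R * p1 (Mw z / R))) =
     (\<lambda>h. phiRx R z * fst h + phiRv R z * snd h)"
    using R by (auto simp: fun_eq_iff phiRx_def phiRv_def field_simps)
  ultimately show "(phiR R has_derivative (\<lambda>h. phiRx R z * fst h + phiRv R z * snd h)) (at z)"
    unfolding phiR_def[abs_def] by simp
next
  fix x v :: real
  have "((\<lambda>w. p1 (Mw (x, w) / R) * w) has_real_derivative
      p2 (Mw (x, v) / R) * ((0 + 0 + 2 * v / 2) / R) * v + p1 (Mw (x, v) / R)) (at v)"
    unfolding Mw_def using R by (auto intro!: derivative_eq_intros simp: power2_eq_square)
  moreover have "p2 (Mw (x, v) / R) * ((0 + 0 + 2 * v / 2) / R) * v + p1 (Mw (x, v) / R) = phiRvv R (x, v)"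
    by (simp add: phiRvv_def power2_eq_square)
  ultimately show "((\<lambda>w. phiRv R (x, w)) has_real_derivative phiRvv R (x, v)) (at v)"
    by (simp add: phiRv_def)
next
  have c1: "continuous_on UNIV (\<lambda>z. p1 (Mw z / R))"
    by (rule continuous_on_compose2[OF p1_cont]) (use R in \<open>auto intro!: continuous_intros Mw_cont\<close>)
  have c2: "continuous_on UNIV (\<lambda>z. p2 (Mw z / R))"
    by (rule continuous_on_compose2[OF p2_cont]) (use R in \<open>auto intro!: continuous_intros Mw_cont\<close>)
  show "continuous_on UNIV (phiRx R)" unfolding phiRx_def[abs_def]
    by (intro continuous_intros c1)
  show "continuous_on UNIV (phiRv R)" unfolding phiRv_def[abs_def]
    by (intro continuous_intros c1)
  show "continuous_on UNIV (phiRvv R)" unfolding phiRvv_def[abs_def]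
    using R by (intro continuous_intros c1 c2) auto
next
  have "{z. phiR R z \<noteq> 0} \<subseteq> {z. Mw z \<le> 2 * R}"
  proof
    fix z assume "z \<in> {z. phiR R z \<noteq> 0}"
    then have "\<not> Mw z / R > 2" using p_large by (auto simp: phiR_def)
    then show "z \<in> {z. Mw z \<le> 2 * R}" using R by (simp add: field_simps)
  qed
  then have "closure {z. phiR R z \<noteq> 0} \<subseteq> {z. Mw z \<le> 2 * R}"
    using Mw_level_compact by (meson closure_minimal compact_imp_closed)
  then show "compact (closure {z. phiR R z \<noteq> 0})"
    using Mw_level_compact compact_Int_closed inf.absorb_iff2 by (metis closed_closure)
qed



definition dlt :: "real \<Rightarrow> real \<Rightarrow> real \<Rightarrow> real \<Rightarrow> real" where
  "dlt a b lam eps0 = a/2 + \<bar>lam\<bar> + eps0 + (b-1)^2/(2 * a) + (1+lam)^2 + 1/2"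
definition Cone :: "real \<Rightarrow> real \<Rightarrow> real \<Rightarrow> real \<Rightarrow> real \<Rightarrow> real" where
  "Cone a b lam I0 eps0 = (dlt a b lam eps0)^2/3 + I0^2/2 + 1 + a"

lemma ineqA:
  fixes x v a b lam I0 eps eps0 :: real
  assumes a: "a > 0" and e: "0 \<le> eps" "eps \<le> eps0"
  shows "(-(a * x - b *  v)) * x - (v * (v-lam) * (v-1) + x - eps * (v-0) + I0) *  v + 1
          \<le> Cone a b lam I0 eps0 - a * (1 + x^2/2 + v^2/2)"
proof -
  define d where "d = dlt a b lam eps0"
  have lhs: "(-(a * x - b *  v)) * x - (v * (v-lam) * (v-1) + x - eps * (v-0) + I0) *  v + 1
     = - a * x^2 + (b-1) * (x *  v) - v^4 + (1+lam) *  v^3 - lam *  v^2 + eps *  v^2 - I0 *  v + 1"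
    by (simp add: algebra_simps power2_eq_square power3_eq_cube eval_nat_numeral)
  have h1: "(b-1) * (x *  v) \<le> a * x^2/2 + ((b-1)^2/(2 * a)) *  v^2"
  proof -
    have "0 \<le> (a * x - (b-1) *  v)^2 / (2 * a)" using a by simp
    also have "(a * x - (b-1) *  v)^2 / (2 * a) = a * x^2/2 - (b-1) * (x *  v) + ((b-1)^2/(2 * a)) *  v^2"
      using a by (simp add: power2_eq_square field_simps)
    finally show ?thesis by linarith
  qed
  have h2: "(1+lam) *  v^3 \<le> v^4/4 + (1+lam)^2 *  v^2"
  proof -
    have "0 \<le> (v^2/2 - (1+lam) *  v)^2" by simp
    also have "(v^2/2 - (1+lam) *  v)^2 = v^4/4 - (1+lam) *  v^3 + (1+lam)^2 *  v^2"
      by (simp add: power2_eq_square power3_eq_cube eval_nat_numeral algebra_simps)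
    finally show ?thesis by linarith
  qed
  have h3: "- I0 *  v \<le> v^2/2 + I0^2/2"
  proof -
    have "0 \<le> (v + I0)^2" by simp
    then show ?thesis by (simp add: power2_eq_square algebra_simps)
  qed
  have v2: "0 \<le> v^2" by simp
  have h4: "- lam *  v^2 \<le> \<bar>lam\<bar>* v^2" using v2
    by (metis abs_ge_minus_self mult_minus_left mult_right_mono)
  have h4': "eps *  v^2 \<le> eps0 *  v^2" using v2 e by (simp add: mult_right_mono)
  have h5: "-3/4 *  v^4 + d *  v^2 \<le> d^2/3"
  proof -
    have "0 \<le> 3/4 * (v^2 - 2 * d/3)^2" by simp
    also have "3/4 * (v^2 - 2 * d/3)^2 = 3/4 *  v^4 - d *  v^2 + d^2/3"
      by (simp add: power2_eq_square eval_nat_numeral algebra_simps)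
    finally show ?thesis by linarith
  qed
  have dd: "d *  v^2 = a/2 *  v^2 + \<bar>lam\<bar>* v^2 + eps0 *  v^2 + ((b-1)^2/(2 * a)) *  v^2 + (1+lam)^2 *  v^2 + 1/2 *  v^2"
    by (simp add: d_def dlt_def algebra_simps)
  have rhs: "Cone a b lam I0 eps0 - a * (1 + x^2/2 + v^2/2) = d^2/3 + I0^2/2 + 1 - a * x^2/2 - a/2 *  v^2"
    by (simp add: Cone_def d_def algebra_simps)
  show ?thesis unfolding lhs rhs using h1 h2 h3 h4 h4' h5 dd by linarith
qed

lemma Cone_pos: "a > 0 \<Longrightarrow> Cone a b lam I0 eps0 > 0"
  unfolding Cone_def by (smt (verit) zero_le_power2 divide_nonneg_nonneg)



definition Kc :: "real \<Rightarrow> real \<Rightarrow> real \<Rightarrow> real \<Rightarrow> real \<Rightarrow> real" where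
  "Kc a b lam I0 eps0 = a + 2 * b + 5 + 3 * \<bar>lam\<bar> + eps0 + 2 * \<bar>I0\<bar>"

lemma abs_mult_le: "\<bar>c\<bar> \<le> C \<Longrightarrow> \<bar>y\<bar> \<le> Y \<Longrightarrow> \<bar>c * y\<bar> \<le> C * Y" for c y C Y :: real
  by (simp add: abs_mult mult_mono')

lemma ineqB:
  fixes x v a b lam I0 eps eps0 :: real
  assumes a: "a > 0" and b: "b > 0" and e: "0 \<le> eps" "eps \<le> eps0"
  shows "\<bar>(-(a * x - b * v)) * x - (v * (v-lam) * (v-1) + x - eps * (v-0) + I0) * v + 1\<bar>
          \<le> Kc a b lam I0 eps0 * (1 + x^2 + v^4)"
proof -
  have lhs: "(-(a * x - b * v)) * x - (v * (v-lam) * (v-1) + x - eps * (v-0) + I0) * v + 1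
     = - a * x^2 + (b-1) * (x * v) - v^4 + (1+lam) * v^3 - lam * v^2 + eps * v^2 - I0 * v + 1"
    by (simp add: algebra_simps power2_eq_square power3_eq_cube eval_nat_numeral)
  have v4: "0 \<le> v^4" "0 \<le> x^2" "0 \<le> v^2" by auto
  have v2: "v^2 \<le> 1 + v^4"
  proof -
    have "0 \<le> (v^2 - 1)^2" by simp
    moreover have "(v^2 - 1)^2 = v^4 - 2 * v^2 + 1" by (simp add: power2_eq_square eval_nat_numeral algebra_simps)
    ultimately show ?thesis using v4 by linarith
  qed
  have v1: "\<bar>v\<bar> \<le> 1 + v^2"
  proof -
    have "0 \<le> (\<bar>v\<bar> - 1/2)^2" by simp
    then show ?thesis by (simp add: power2_eq_square algebra_simps abs_mult_self_eq)
  qed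
  have v3: "\<bar>v^3\<bar> \<le> v^2 + v^4"
  proof (cases "\<bar>v\<bar> \<le> 1")
    case True
    have "\<bar>v^3\<bar> = \<bar>v\<bar> * v^2" by (simp add: power3_eq_cube power2_eq_square abs_mult)
    also have "\<dots> \<le> 1 * v^2" using True by (intro mult_right_mono) auto
    finally show ?thesis using v4 by linarith
  next
    case False
    have "\<bar>v^3\<bar> = \<bar>v\<bar> * v^2" by (simp add: power3_eq_cube power2_eq_square abs_mult)
    also have "\<bar>v\<bar> * v^2 \<le> \<bar>v\<bar> * v^2 * \<bar>v\<bar>"
      using False by (simp add: mult_le_cancel_left1 not_less)
    also have "\<dots> = v^4" by (simp add: eval_nat_numeral abs_mult_self_eq algebra_simps)
    finally show ?thesis using v4 by linarith
  qed
  have xv: "\<bar>x * v\<bar> \<le> x^2 + v^2"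
  proof -
    have "0 \<le> (\<bar>x\<bar> - \<bar>v\<bar>)^2" by simp
    then have "2 * (\<bar>x\<bar> * \<bar>v\<bar>) \<le> x^2 + v^2" by (simp add: power2_eq_square algebra_simps abs_mult_self_eq)
    moreover have "0 \<le> \<bar>x\<bar> * \<bar>v\<bar>" by simp ultimately show ?thesis unfolding abs_mult by linarith
  qed
  have t1: "\<bar>(b-1) * (x * v)\<bar> \<le> b * x^2 + x^2 + b + 1 + b * v^4 + v^4"
  proof -
    have "\<bar>(b-1) * (x * v)\<bar> \<le> (b+1) * (x^2 + (1 + v^4))"
      by (rule abs_mult_le) (use b xv v2 in auto)
    then show ?thesis by (simp add: algebra_simps)
  qed
  have t2: "\<bar>(1+lam) * v^3\<bar> \<le> 1 + 2 * v^4 + \<bar>lam\<bar> + 2 * (\<bar>lam\<bar> * v^4)"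
  proof -
    have "\<bar>(1+lam) * v^3\<bar> \<le> (1 + \<bar>lam\<bar>) * (1 + 2 * v^4)"
      by (rule abs_mult_le) (use v3 v2 in auto)
    then show ?thesis by (simp add: algebra_simps)
  qed
  have t3: "\<bar>lam * v^2\<bar> \<le> \<bar>lam\<bar> + \<bar>lam\<bar> * v^4"
  proof -
    have "\<bar>lam * v^2\<bar> \<le> \<bar>lam\<bar> * (1 + v^4)"
      by (rule abs_mult_le) (use v2 in auto)
    then show ?thesis by (simp add: algebra_simps)
  qed
  have t4: "\<bar>eps * v^2\<bar> \<le> eps0 + eps0 * v^4"
  proof -
    have "\<bar>eps * v^2\<bar> \<le> eps0 * (1 + v^4)"
      by (rule abs_mult_le) (use v2 e in auto)
    then show ?thesis by (simp add: algebra_simps)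
  qed
  have t5: "\<bar>I0 * v\<bar> \<le> 2 * \<bar>I0\<bar> + \<bar>I0\<bar> * v^4"
  proof -
    have "\<bar>I0 * v\<bar> \<le> \<bar>I0\<bar> * (2 + v^4)"
      by (rule abs_mult_le) (use v1 v2 in auto)
    then show ?thesis by (simp add: algebra_simps)
  qed
  have t0: "\<bar>a * x^2\<bar> \<le> a * x^2" using a by (simp add: abs_mult)
  have K: "Kc a b lam I0 eps0 * (1 + x^2 + v^4) = a + 2 * b + 5 + 3 * \<bar>lam\<bar> + eps0 + 2 * \<bar>I0\<bar>
     + (a * x^2 + 2 * (b * x^2) + 5 * x^2 + 3 * (\<bar>lam\<bar> * x^2) + eps0 * x^2 + 2 * (\<bar>I0\<bar> * x^2))
     + (a * v^4 + 2 * (b * v^4) + 5 * v^4 + 3 * (\<bar>lam\<bar> * v^4) + eps0 * v^4 + 2 * (\<bar>I0\<bar> * v^4))"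
    by (simp add: Kc_def algebra_simps)
  have nn: "0 \<le> a * x^2" "0 \<le> b * x^2" "0 \<le> \<bar>lam\<bar> * x^2" "0 \<le> eps0 * x^2" "0 \<le> \<bar>I0\<bar> * x^2"
     "0 \<le> a * v^4" "0 \<le> b * v^4" "0 \<le> \<bar>lam\<bar> * v^4" "0 \<le> eps0 * v^4" "0 \<le> \<bar>I0\<bar> * v^4"
    using a b e v4 by auto
  have ab: "0 \<le> \<bar>lam\<bar>" "0 \<le> \<bar>I0\<bar>" by auto
  show ?thesis unfolding lhs K
    using t0 t1 t2 t3 t4 t5 nn ab v4 a b e unfolding abs_le_iff by linarith
qed



definition wt :: "real \<times> real \<Rightarrow> real" where "wt z = 1 + (fst z)^2 + (snd z)^4"

lemma wt_ge1: "1 \<le> wt z" by (simp add: wt_def)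

lemma wt_cont: "continuous_on UNIV wt"
  unfolding wt_def[abs_def] by (intro continuous_intros)

lemma wt_meas[measurable]: "wt \<in> borel_measurable borel"
  by (rule borel_measurable_continuous_onI[OF wt_cont])

lemma Mw_meas[measurable]: "Mw \<in> borel_measurable borel"
  by (rule borel_measurable_continuous_onI[OF Mw_cont])

lemma snd_meas[measurable]: "(snd :: real \<times> real \<Rightarrow> real) \<in> borel_measurable borel"
  by (rule borel_measurable_continuous_onI) (intro continuous_intros)

lemma fst_meas[measurable]: "(fst :: real \<times> real \<Rightarrow> real) \<in> borel_measurable borel"
  by (rule borel_measurable_continuous_onI) (intro continuous_intros)

lemma prod_meas:
  fixes g :: "real \<times> real \<Rightarrow> real" and F :: "real \<Rightarrow> real \<times> real \<Rightarrow> real"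
  assumes "g \<in> borel_measurable borel" "(\<lambda>x. F (fst x) (snd x)) \<in> borel_measurable (lborel \<Otimes>\<^sub>M lborel)"
  shows "(\<lambda>x. g (snd x) * F (fst x) (snd x)) \<in> borel_measurable (lborel \<Otimes>\<^sub>M lborel)"
proof (rule borel_measurable_times[OF _ assms(2)])
  show "(\<lambda>x. g (snd x)) \<in> borel_measurable (lborel \<Otimes>\<^sub>M lborel)"
    using measurable_compose[OF measurable_snd, of g lborel lborel] assms(1) by simp
qed

locale sol =
  fixes a b lam I0 eps0 eps :: real and f :: "real \<Rightarrow> real \<times> real \<Rightarrow> real"
  assumes a: "a > 0" and b: "b > 0" and e0: "0 \<le> eps" "eps < eps0"
    and sol: "is_solution a b lam I0 eps f" and f0: "in_L1M (f 0)"
begin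

lemma pd: "t \<ge> 0 \<Longrightarrow> prob_density (f t)"
  using sol by (simp add: is_solution_def)

lemma fnn: "t \<ge> 0 \<Longrightarrow> 0 \<le> f t z"
  using pd[of t] by (cases z) (auto simp: prob_density_def)

lemma fmeas2[measurable]: "(\<lambda>(s, z). f s z) \<in> borel_measurable (lborel \<Otimes>\<^sub>M lborel)"
  using sol by (simp add: is_solution_def lborel_prod)

lemma fmeas2': "(\<lambda>x. f (fst x) (snd x)) \<in> borel_measurable (lborel \<Otimes>\<^sub>M lborel)"
  using fmeas2 by (simp add: case_prod_beta')

lemma fmeas[measurable]: "f s \<in> borel_measurable lborel"
  using measurable_Pair2[OF fmeas2, of s] by simp

lemma fint: "t \<ge> 0 \<Longrightarrow> integrable lborel (f t)"
  using pd by (auto simp: prob_density_def)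

lemma fint1: "t \<ge> 0 \<Longrightarrow> (\<integral>z. f t z \<partial>lborel) = 1"
  using pd by (auto simp: prob_density_def)

definition j :: "real \<Rightarrow> real" where "j s = Jf (f s)"

lemma j_meas[measurable]: "j \<in> borel_measurable lborel"
proof -
  have "(\<lambda>(s, z). snd z * f s z) \<in> borel_measurable (lborel \<Otimes>\<^sub>M lborel)"
    using prod_meas[OF snd_meas fmeas2'] by (simp add: case_prod_beta')
  then have "(\<lambda>s. \<integral>z. snd z * f s z \<partial>lborel) \<in> borel_measurable lborel"
    by (rule lborel.borel_measurable_lebesgue_integral)
  then show ?thesis unfolding j_def[abs_def] Jf_def .
qed

definition W :: "real \<Rightarrow> real" where "W s = (\<integral>z. wt z * f s z \<partial>lborel)"

lemma mom: "T \<ge> 0 \<Longrightarrow> integrable (lborel \<Otimes>\<^sub>M lborel)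
   (\<lambda>x. indicator ({0..T} \<times> UNIV) x * (case x of (s, z) \<Rightarrow> wt z * f s z))"
  using sol unfolding is_solution_def set_integrable_def by (simp add: lborel_prod wt_def)

lemma W_int: assumes T: "T \<ge> 0" shows "set_integrable lborel {0..T} W"
proof -
  have "integrable lborel (\<lambda>s. LBINT z. indicator ({0..T} \<times> UNIV) (s, z) * (case (s, z) of (s, z) \<Rightarrow> wt z * f s z))"
    using lborel_pair.integrable_fst'[OF mom[OF T]] by simp
  moreover have "(LBINT z. indicator ({0..T} \<times> UNIV) (s, z) * (case (s, z) of (s, z) \<Rightarrow> wt z * f s z))
      = indicator {0..T} s * W s" for s
    by (auto simp: W_def indicator_def)
  ultimately show ?thesis unfolding set_integrable_def by simp
qed

definition good :: "real \<Rightarrow> bool" where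
  "good s \<longleftrightarrow> 0 \<le> s \<and> integrable lborel (\<lambda>z. wt z * f s z)"

lemma AE_good: "AE s in lborel. 0 \<le> s \<longrightarrow> good s"
proof -
  have "AE s in lborel. \<forall>n::nat. integrable lborel (\<lambda>z. indicator ({0..real n} \<times> UNIV) (s, z) * (case (s, z) of (s, z) \<Rightarrow> wt z * f s z))"
    unfolding AE_all_countable
    by (intro allI lborel_pair.AE_integrable_fst'[OF mom]) simp
  then show ?thesis
  proof (rule eventually_mono)
    fix s assume A: "\<forall>n::nat. integrable lborel (\<lambda>z. indicator ({0..real n} \<times> UNIV) (s, z) * (case (s, z) of (s, z) \<Rightarrow> wt z * f s z))"
    show "0 \<le> s \<longrightarrow> good s"
    proof
      assume s: "0 \<le> s"
      obtain n :: nat where n: "s \<le> real n" using real_arch_simple by blast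
      have "integrable lborel (\<lambda>z. indicator ({0..real n} \<times> UNIV) (s, z) * (case (s, z) of (s, z) \<Rightarrow> wt z * f s z))"
        using A by blast
      moreover have "(\<lambda>z. indicator ({0..real n} \<times> UNIV) (s, z) * (case (s, z) of (s, z) \<Rightarrow> wt z * f s z)) = (\<lambda>z. wt z * f s z)"
        using s n by (auto simp: indicator_def)
      ultimately show "good s" using s by (simp add: good_def)
    qed
  qed
qed

lemma good_int: assumes g: "good s" and h[measurable]: "h \<in> borel_measurable borel"
  and hb: "\<And>z. \<bar>h z\<bar> \<le> C * wt z"
  shows "integrable lborel (\<lambda>z. f s z * h z)"
proof (rule Bochner_Integration.integrable_bound)
  show "integrable lborel (\<lambda>z. C * (wt z * f s z))" using g by (simp add: good_def)
  show "(\<lambda>z. f s z * h z) \<in> borel_measurable lborel" using fmeas h by simp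
  show "AE z in lborel. norm (f s z * h z) \<le> norm (C * (wt z * f s z))"
  proof (rule AE_I2)
    fix z
    have f: "0 \<le> f s z" using g fnn by (simp add: good_def)
    have "norm (f s z * h z) = f s z * \<bar>h z\<bar>" using f by (simp add: abs_mult)
    also have "\<dots> \<le> f s z * (C * wt z)" using f hb by (simp add: mult_left_mono)
    also have "\<dots> \<le> norm (C * (wt z * f s z))" by (simp add: algebra_simps)
    finally show "norm (f s z * h z) \<le> norm (C * (wt z * f s z))" .
  qed
qed

end


lemma p1_meas[measurable]: "p1 \<in> borel_measurable borel"
  by (rule borel_measurable_continuous_onI[OF p1_cont])
lemma p2_meas[measurable]: "p2 \<in> borel_measurable borel"
  by (rule borel_measurable_continuous_onI[OF p2_cont])

lemma snd_lift[measurable]: "g \<in> borel_measurable borel \<Longrightarrow> (\<lambda>x. g (snd x)) \<in> borel_measurable (lborel \<Otimes>\<^sub>M (lborel :: (real\<times>real) measure))"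
  for g :: "real \<times> real \<Rightarrow> real"
  using measurable_compose[OF measurable_snd, of g lborel lborel] by simp
lemma fst_lift[measurable]: "g \<in> borel_measurable borel \<Longrightarrow> (\<lambda>x. g (fst x)) \<in> borel_measurable ((lborel :: real measure) \<Otimes>\<^sub>M (lborel :: (real\<times>real) measure))"
  for g :: "real \<Rightarrow> real"
  using measurable_compose[OF measurable_fst, of g lborel lborel] by simp

context sol begin

lemma fmeas2''[measurable]: "(\<lambda>x. f (fst x) (snd x)) \<in> borel_measurable (lborel \<Otimes>\<^sub>M lborel)"
  by (rule fmeas2')

definition g0 :: "real \<times> real \<Rightarrow> real" where
  "g0 z = (- Acoef a b z) * fst z - Bcoef lam I0 eps 0 z * snd z + 1"

lemma g0_meas[measurable]: "g0 \<in> borel_measurable borel"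
  unfolding g0_def[abs_def] Acoef_def Bcoef_def by measurable

definition gen :: "real \<Rightarrow> real \<times> real \<Rightarrow> real" where
  "gen s z = g0 z - eps * j s * snd z"

definition GR :: "real \<Rightarrow> real \<Rightarrow> real \<times> real \<Rightarrow> real" where
  "GR R s z = f s z * (- Acoef a b z * phiRx R z - Bcoef lam I0 eps (Jf (f s)) z * phiRv R z + phiRvv R z)"

lemma GR_alt: "GR R s z = f s z * (p1 (Mw z / R) * gen s z + p2 (Mw z / R) / R * (snd z)^2)"
  unfolding GR_def gen_def g0_def phiRx_def phiRv_def phiRvv_def Bcoef_def j_def
  by (simp add: algebra_simps)

lemma GR_meas[measurable]: "(\<lambda>x. GR R (fst x) (snd x)) \<in> borel_measurable (lborel \<Otimes>\<^sub>M lborel)"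
  unfolding GR_alt gen_def by measurable

definition H :: "real \<Rightarrow> real \<Rightarrow> real" where "H R s = (\<integral>z. GR R s z \<partial>lborel)"
definition Hinf :: "real \<Rightarrow> real" where "Hinf s = (\<integral>z. f s z * gen s z \<partial>lborel)"
definition m :: "real \<Rightarrow> real" where "m t = (\<integral>z. f t z * Mw z \<partial>lborel)"

lemma H_meas[measurable]: "H R \<in> borel_measurable lborel"
proof -
  have "(\<lambda>(s, z). GR R s z) \<in> borel_measurable (lborel \<Otimes>\<^sub>M lborel)"
    using GR_meas by (simp add: case_prod_beta')
  then show ?thesis unfolding H_def[abs_def] by (rule lborel.borel_measurable_lebesgue_integral)
qed

lemma Hinf_meas[measurable]: "Hinf \<in> borel_measurable lborel"
proof -
  have "(\<lambda>x. f (fst x) (snd x) * gen (fst x) (snd x)) \<in> borel_measurable (lborel \<Otimes>\<^sub>M lborel)"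
    unfolding gen_def by measurable
  then have "(\<lambda>(s, z). f s z * gen s z) \<in> borel_measurable (lborel \<Otimes>\<^sub>M lborel)"
    by (simp add: case_prod_beta')
  then show ?thesis unfolding Hinf_def[abs_def] by (rule lborel.borel_measurable_lebesgue_integral)
qed

end


lemma wt_bounds: "\<bar>snd z\<bar> \<le> wt z" "(snd z)^2 \<le> wt z" "Mw z \<le> 2 * wt z" "0 \<le> Mw z" "1 \<le> wt z"
proof -
  have v4: "0 \<le> (snd z)^4" "0 \<le> (fst z)^2" "0 \<le> (snd z)^2" by auto
  have v2: "(snd z)^2 \<le> 1 + (snd z)^4"
  proof -
    have "0 \<le> ((snd z)^2 - 1)^2" by simp
    moreover have "((snd z)^2 - 1)^2 = (snd z)^4 - 2 * (snd z)^2 + 1" by (simp add: power2_eq_square eval_nat_numeral algebra_simps)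
    ultimately show ?thesis using v4 by linarith
  qed
  have v1: "2 * \<bar>snd z\<bar> \<le> 1 + (snd z)^2"
  proof -
    have "0 \<le> (\<bar>snd z\<bar> - 1)^2" by simp
    then show ?thesis by (simp add: power2_eq_square algebra_simps abs_mult_self_eq)
  qed
  show "\<bar>snd z\<bar> \<le> wt z" using v1 v2 v4 unfolding wt_def Mw_def by linarith
  show "(snd z)^2 \<le> wt z" using v1 v2 v4 unfolding wt_def Mw_def by linarith
  have "2 * wt z = 2 + 2 * (fst z)^2 + 2 * (snd z)^4" by (simp add: wt_def)
  then show "Mw z \<le> 2 * wt z" using v1 v2 v4 unfolding Mw_def by linarith
  show "0 \<le> Mw z" using v1 v2 v4 unfolding wt_def Mw_def by linarith
  show "1 \<le> wt z" using v1 v2 v4 unfolding wt_def Mw_def by linarith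
qed

context sol begin

lemma Bcoef_split: "Bcoef lam I0 eps jj z = Bcoef lam I0 eps 0 z + eps * jj"
  by (simp add: Bcoef_def algebra_simps)

lemma g0_upper: "g0 z \<le> Cone a b lam I0 eps0 - a * Mw z"
  using ineqA[OF a e0(1), of eps0 "fst z" b "snd z" lam I0] e0
  by (simp add: g0_def Acoef_def Bcoef_def Mw_def)

lemma g0_abs: "\<bar>g0 z\<bar> \<le> Kc a b lam I0 eps0 * wt z"
  using ineqB[OF a b e0(1), of eps0 "fst z" "snd z" lam I0] e0
  by (simp add: g0_def Acoef_def Bcoef_def wt_def)

lemma p2_term: assumes R: "R > 0" shows "\<bar>p2 (Mw z / R) / R * (snd z)^2\<bar> \<le> 2208"
proof (cases "Mw z / R > 2")
  case True then show ?thesis using p_large by simp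
next
  case False
  then have "Mw z \<le> 2 * R" using R by (simp add: field_simps)
  then have v: "(snd z)^2 \<le> 4 * R" using Mw_ge(3)[of z] by linarith
  have "\<bar>p2 (Mw z / R) / R * (snd z)^2\<bar> = \<bar>p2 (Mw z / R)\<bar> * ((snd z)^2 / R)"
    using R by (simp add: abs_mult)
  also have "\<dots> \<le> 552 * 4"
    using p2_bound v R by (intro mult_mono) (auto simp: field_simps)
  finally show ?thesis by simp
qed

definition dom :: "real \<Rightarrow> real \<times> real \<Rightarrow> real" where
  "dom s z = (186 * Kc a b lam I0 eps0 + 2208) * (wt z * f s z) + (186 * eps * \<bar>j s\<bar>) * (f s z * \<bar>snd z\<bar>)"

lemma gen_abs: "\<bar>gen s z\<bar> \<le> Kc a b lam I0 eps0 * wt z + eps * \<bar>j s\<bar> * \<bar>snd z\<bar>"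
proof -
  have "\<bar>gen s z\<bar> \<le> \<bar>g0 z\<bar> + \<bar>eps * j s * snd z\<bar>" unfolding gen_def by (rule abs_triangle_ineq4)
  then show ?thesis using g0_abs[of z] e0 by (simp add: abs_mult)
qed

lemma GR_bound: assumes s: "s \<ge> 0" and R: "R > 0" shows "\<bar>GR R s z\<bar> \<le> dom s z"
proof -
  have f: "0 \<le> f s z" using fnn s .
  have "\<bar>p1 (Mw z / R) * gen s z + p2 (Mw z / R) / R * (snd z)^2\<bar>
        \<le> \<bar>p1 (Mw z / R) * gen s z\<bar> + \<bar>p2 (Mw z / R) / R * (snd z)^2\<bar>" by (rule abs_triangle_ineq)
  also have "\<dots> \<le> 186 * (Kc a b lam I0 eps0 * wt z + eps * \<bar>j s\<bar> * \<bar>snd z\<bar>) + 2208 * wt z"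
  proof -
    have "\<bar>p1 (Mw z / R) * gen s z\<bar> \<le> 186 * (Kc a b lam I0 eps0 * wt z + eps * \<bar>j s\<bar> * \<bar>snd z\<bar>)"
      unfolding abs_mult using p1_bound gen_abs by (intro mult_mono) auto
    moreover have "\<bar>p2 (Mw z / R) / R * (snd z)^2\<bar> \<le> 2208 * wt z"
      using p2_term[OF R, of z] wt_bounds(5)[of z] by linarith
    ultimately show ?thesis by linarith
  qed
  finally have "\<bar>GR R s z\<bar> \<le> f s z * (186 * (Kc a b lam I0 eps0 * wt z + eps * \<bar>j s\<bar> * \<bar>snd z\<bar>) + 2208 * wt z)"
    unfolding GR_alt abs_mult using f by (simp add: mult_left_mono)
  also have "\<dots> = dom s z" by (simp add: dom_def algebra_simps)
  finally show ?thesis .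
qed

lemma GR_event: assumes R: "R > 0" "Mw z \<le> R" shows "GR R s z = f s z * gen s z"
proof -
  have "Mw z / R \<le> 1" using R by (simp add: field_simps)
  then show ?thesis unfolding GR_alt using p_small by simp
qed

lemma good_nn: "good s \<Longrightarrow> 0 \<le> f s z" using fnn by (simp add: good_def)

lemma good_ints:
  assumes g: "good s"
  shows "integrable lborel (\<lambda>z. f s z)" "integrable lborel (\<lambda>z. f s z * snd z)"
    "integrable lborel (\<lambda>z. f s z * \<bar>snd z\<bar>)" "integrable lborel (\<lambda>z. f s z * (snd z)^2)"
    "integrable lborel (\<lambda>z. f s z * Mw z)" "integrable lborel (\<lambda>z. f s z * g0 z)"
    "integrable lborel (\<lambda>z. wt z * f s z)"
proof -
  show "integrable lborel (\<lambda>z. f s z)" using good_int[OF g, of "\<lambda>_. 1" 1] wt_bounds(5) by simp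
  show "integrable lborel (\<lambda>z. f s z * snd z)" using good_int[OF g, of snd 1] wt_bounds(1) by simp
  show "integrable lborel (\<lambda>z. f s z * \<bar>snd z\<bar>)" using good_int[OF g, of "\<lambda>z. \<bar>snd z\<bar>" 1] wt_bounds(1) by simp
  show "integrable lborel (\<lambda>z. f s z * (snd z)^2)" using good_int[OF g, of "\<lambda>z. (snd z)^2" 1] wt_bounds(2) by simp
  show "integrable lborel (\<lambda>z. f s z * Mw z)" using good_int[OF g, of Mw 2] wt_bounds(3,4) by simp
  show "integrable lborel (\<lambda>z. f s z * g0 z)" using good_int[OF g, of g0 "Kc a b lam I0 eps0"] g0_abs by simp
  show "integrable lborel (\<lambda>z. wt z * f s z)" using g by (simp add: good_def)
qed

lemma int_gen: "good s \<Longrightarrow> integrable lborel (\<lambda>z. f s z * gen s z)"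
proof -
  assume g: "good s"
  have "integrable lborel (\<lambda>z. f s z * g0 z - (eps * j s) * (f s z * snd z))"
    using good_ints[OF g] by auto
  then show ?thesis by (simp add: gen_def algebra_simps)
qed

lemma int_dom: "good s \<Longrightarrow> integrable lborel (dom s)"
  unfolding dom_def[abs_def] using good_ints by auto

lemma int_GR: assumes g: "good s" and R: "R > 0" shows "integrable lborel (GR R s)"
proof (rule Bochner_Integration.integrable_bound[OF int_dom[OF g]])
  show "GR R s \<in> borel_measurable lborel"
    using measurable_Pair2[OF GR_meas, of s] by simp
  show "AE z in lborel. norm (GR R s z) \<le> norm (dom s z)"
    using GR_bound[OF _ R, of s] g by (auto simp: good_def intro!: AE_I2 order_trans[OF _ abs_ge_self])
qed

end


context sol begin

lemma wt_nn: "0 \<le> wt z" using wt_bounds(5)[of z] by linarith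

lemma W_nonneg: "good s \<Longrightarrow> 0 \<le> W s"
  unfolding W_def by (intro integral_nonneg_AE AE_I2 mult_nonneg_nonneg wt_nn good_nn)

lemma CS: assumes g: "good s" shows "\<bar>j s\<bar> * (\<integral>z. f s z * \<bar>snd z\<bar> \<partial>lborel) \<le> W s"
proof -
  define c where "c = (\<integral>z. f s z * \<bar>snd z\<bar> \<partial>lborel)"
  note I = good_ints[OF g]
  have fn: "\<And>z. 0 \<le> f s z" using good_nn[OF g] .
  have c0: "0 \<le> c" unfolding c_def using fn by (intro integral_nonneg_AE) auto
  have jc: "\<bar>j s\<bar> \<le> c"
  proof -
    have "\<bar>j s\<bar> = norm (\<integral>z. snd z * f s z \<partial>lborel)" by (simp add: j_def Jf_def)
    also have "\<dots> \<le> (\<integral>z. norm (snd z * f s z) \<partial>lborel)" by (rule integral_norm_bound)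
    also have "(\<integral>z. norm (snd z * f s z) \<partial>lborel) = c"
      unfolding c_def using fn by (intro Bochner_Integration.integral_cong) (auto simp: abs_mult)
    finally show ?thesis .
  qed
  have "0 \<le> (\<integral>z. f s z * (\<bar>snd z\<bar> - c)^2 \<partial>lborel)"
    using fn by (intro integral_nonneg_AE) auto
  also have "(\<integral>z. f s z * (\<bar>snd z\<bar> - c)^2 \<partial>lborel) =
      (\<integral>z. (f s z * (snd z)^2 - (2 * c) * (f s z * \<bar>snd z\<bar>)) + c^2 * f s z \<partial>lborel)"
    by (intro Bochner_Integration.integral_cong) (auto simp: power2_eq_square algebra_simps)
  also have "\<dots> = (\<integral>z. f s z * (snd z)^2 \<partial>lborel) - (2 * c) * c + c^2 * 1"
    using I fint1[of s] g by (simp add: c_def good_def)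
  finally have cc: "c * c \<le> (\<integral>z. f s z * (snd z)^2 \<partial>lborel)" by (simp add: power2_eq_square)
  have pw: "\<And>z. f s z * (snd z)^2 \<le> wt z * f s z"
    by (metis mult.commute mult_right_mono fn wt_bounds(2))
  have "(\<integral>z. f s z * (snd z)^2 \<partial>lborel) \<le> W s"
    unfolding W_def using I pw by (intro integral_mono) auto
  moreover have "\<bar>j s\<bar> * c \<le> c * c" using jc c0 by (simp add: mult_right_mono)
  ultimately show ?thesis using cc unfolding c_def by linarith
qed

definition KH :: real where "KH = 186 * Kc a b lam I0 eps0 + 186 * eps0 + 2208"

lemma H_bound: assumes g: "good s" and R: "R > 0" shows "\<bar>H R s\<bar> \<le> KH * W s"
proof -
  note I = good_ints[OF g]
  have "\<bar>H R s\<bar> = norm (\<integral>z. GR R s z \<partial>lborel)" by (simp add: H_def)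
  also have "\<dots> \<le> (\<integral>z. norm (GR R s z) \<partial>lborel)" by (rule integral_norm_bound)
  also have "\<dots> \<le> (\<integral>z. dom s z \<partial>lborel)"
    using int_GR[OF g R] int_dom[OF g] GR_bound[OF _ R, of s] g
    by (intro integral_mono) (auto simp: good_def)
  also have "(\<integral>z. dom s z \<partial>lborel) = (186 * Kc a b lam I0 eps0 + 2208) * W s
      + (186 * eps) * (\<bar>j s\<bar> * (\<integral>z. f s z * \<bar>snd z\<bar> \<partial>lborel))"
    unfolding dom_def[abs_def] W_def using I by simp
  also have "\<dots> \<le> (186 * Kc a b lam I0 eps0 + 2208) * W s + (186 * eps) * W s"
    using CS[OF g] e0 by (intro add_left_mono mult_left_mono) auto
  also have "\<dots> \<le> KH * W s"
  proof -
    have "(186 * eps) * W s \<le> (186 * eps0) * W s" using e0 W_nonneg[OF g] by (intro mult_right_mono) auto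
    then show ?thesis unfolding KH_def by (simp add: algebra_simps)
  qed
  finally show ?thesis .
qed

lemma H_lim: assumes g: "good s" shows "(\<lambda>n. H (real (Suc n)) s) \<longlonglongrightarrow> Hinf s"
  unfolding H_def Hinf_def
proof (rule integral_dominated_convergence[where w="dom s"])
  show "(\<lambda>z. f s z * gen s z) \<in> borel_measurable lborel" using int_gen[OF g] by auto
  show "\<And>n. GR (real (Suc n)) s \<in> borel_measurable lborel" using int_GR[OF g] by auto
  show "integrable lborel (dom s)" by (rule int_dom[OF g])
  show "\<And>n. AE z in lborel. norm (GR (real (Suc n)) s z) \<le> dom s z"
    using GR_bound g by (auto simp: good_def intro!: AE_I2)
  show "AE z in lborel. (\<lambda>n. GR (real (Suc n)) s z) \<longlonglongrightarrow> f s z * gen s z"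
  proof (rule AE_I2)
    fix z
    obtain N :: nat where N: "Mw z \<le> real N" using real_arch_simple by blast
    have "\<forall>n\<ge>N. GR (real (Suc n)) s z = f s z * gen s z"
      using N by (auto intro!: GR_event)
    then show "(\<lambda>n. GR (real (Suc n)) s z) \<longlonglongrightarrow> f s z * gen s z"
      by (intro tendsto_eventually) (auto simp: eventually_sequentially)
  qed
qed

lemma Hinf_bound: assumes g: "good s" shows "\<bar>Hinf s\<bar> \<le> KH * W s"
proof -
  have "((\<lambda>n. \<bar>H (real (Suc n)) s\<bar>) \<longlongrightarrow> \<bar>Hinf s\<bar>) sequentially"
    using H_lim[OF g] by (rule tendsto_rabs)
  then show ?thesis
    by (rule tendsto_upperbound) (use H_bound[OF g] in auto)
qed

lemma Hinf_le: assumes g: "good s" shows "Hinf s \<le> Cone a b lam I0 eps0 - a * m s"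
proof -
  note I = good_ints[OF g]
  have fn: "\<And>z. 0 \<le> f s z" using good_nn[OF g] .
  have "Hinf s = (\<integral>z. f s z * g0 z - (eps * j s) * (f s z * snd z) \<partial>lborel)"
    unfolding Hinf_def gen_def by (intro Bochner_Integration.integral_cong) (auto simp: algebra_simps)
  also have "\<dots> = (\<integral>z. f s z * g0 z \<partial>lborel) - eps * j s * j s"
    using I by (simp add: j_def Jf_def mult.commute)
  also have "\<dots> \<le> (\<integral>z. f s z * g0 z \<partial>lborel)"
    using e0 by (simp add: mult_nonneg_nonneg) (metis mult.assoc mult_nonneg_nonneg zero_le_square)
  also have "\<dots> \<le> (\<integral>z. Cone a b lam I0 eps0 * f s z - a * (f s z * Mw z) \<partial>lborel)"
  proof (intro integral_mono)
    show "integrable lborel (\<lambda>z. f s z * g0 z)" using I by simp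
    show "integrable lborel (\<lambda>z. Cone a b lam I0 eps0 * f s z - a * (f s z * Mw z))" using I by simp
    fix z
    have "f s z * g0 z \<le> f s z * (Cone a b lam I0 eps0 - a * Mw z)"
      using fn g0_upper by (intro mult_left_mono) auto
    then show "f s z * g0 z \<le> Cone a b lam I0 eps0 * f s z - a * (f s z * Mw z)"
      by (simp add: algebra_simps)
  qed
  also have "\<dots> = Cone a b lam I0 eps0 - a * m s"
    using I fint1[of s] g by (simp add: m_def good_def)
  finally show ?thesis .
qed

end


lemma p0_cont: "continuous_on UNIV p0"
  using p0_deriv by (meson DERIV_isCont continuous_at_imp_continuous_on)
lemma p0_meas[measurable]: "p0 \<in> borel_measurable borel"
  by (rule borel_measurable_continuous_onI[OF p0_cont])

lemma phiR_meas[measurable]: "phiR R \<in> borel_measurable borel"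
  unfolding phiR_def[abs_def] by measurable

lemma phiR_bounds: assumes R: "R > 0" shows "0 \<le> phiR R z" "phiR R z \<le> Mw z" "phiR R z \<le> 2 * R"
proof -
  have M: "0 \<le> Mw z / R" using wt_bounds(4)[of z] R by simp
  show "0 \<le> phiR R z" unfolding phiR_def using p0_nonneg[OF M] R by simp
  have "R * p0 (Mw z / R) \<le> R * (Mw z / R)" using p0_le[OF M] R by (intro mult_left_mono) auto
  then show "phiR R z \<le> Mw z" unfolding phiR_def using R by simp
  show "phiR R z \<le> 2 * R"
  proof (cases "Mw z / R > 2")
    case True then show ?thesis using p_large R by (simp add: phiR_def)
  next
    case False
    have "R * p0 (Mw z / R) \<le> R * 2" using p0_le[OF M] False R by (intro mult_left_mono) auto
    then show ?thesis unfolding phiR_def by simp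
  qed
qed

lemma phiR_event: "R > 0 \<Longrightarrow> Mw z \<le> R \<Longrightarrow> phiR R z = Mw z"
  unfolding phiR_def using p_small[of "Mw z / R"] by (simp add: field_simps)

context sol begin

lemma ident: assumes t: "t \<ge> 0" and R: "R > 0"
  shows "(\<integral>z. phiR R z * f t z \<partial>lborel) = (\<integral>z. phiR R z * f 0 z \<partial>lborel) + (\<integral>s\<in>{0..t}. H R s \<partial>lborel)"
  using sol phiR_test[OF R] t unfolding is_solution_def H_def GR_def by blast

lemma Hinf_int: assumes T: "T \<ge> 0" shows "set_integrable lborel {0..T} Hinf"
  unfolding set_integrable_def
proof (rule Bochner_Integration.integrable_bound)
  show "integrable lborel (\<lambda>s. KH * (indicator {0..T} s *\<^sub>R W s))"
    using W_int[OF T] unfolding set_integrable_def by simp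
  show "(\<lambda>s. indicator {0..T} s *\<^sub>R Hinf s) \<in> borel_measurable lborel" by measurable
  show "AE s in lborel. norm (indicator {0..T} s *\<^sub>R Hinf s) \<le> norm (KH * (indicator {0..T} s *\<^sub>R W s))"
    using AE_good
  proof (rule eventually_mono)
    fix s assume g: "0 \<le> s \<longrightarrow> good s"
    show "norm (indicator {0..T} s *\<^sub>R Hinf s) \<le> norm (KH * (indicator {0..T} s *\<^sub>R W s))"
    proof (cases "s \<in> {0..T}")
      case True
      then have "good s" using g by auto
      then have "\<bar>Hinf s\<bar> \<le> KH * W s" by (rule Hinf_bound)
      then have "\<bar>Hinf s\<bar> \<le> \<bar>KH * W s\<bar>" by (rule order_trans[OF _ abs_ge_self])
      then show ?thesis using True by (simp add: indicator_def)
    qed simp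
  qed
qed

lemma lim_H: assumes t: "t \<ge> 0"
  shows "(\<lambda>n. (\<integral>s\<in>{0..t}. H (real (Suc n)) s \<partial>lborel)) \<longlonglongrightarrow> (\<integral>s\<in>{0..t}. Hinf s \<partial>lborel)"
  unfolding set_lebesgue_integral_def
proof (rule integral_dominated_convergence[where w="\<lambda>s. KH * (indicator {0..t} s *\<^sub>R W s)"])
  show "integrable lborel (\<lambda>s. KH * (indicator {0..t} s *\<^sub>R W s))"
    using W_int[OF t] unfolding set_integrable_def by simp
  show "(\<lambda>s. indicator {0..t} s *\<^sub>R Hinf s) \<in> borel_measurable lborel" by measurable
  show "\<And>n. (\<lambda>s. indicator {0..t} s *\<^sub>R H (real (Suc n)) s) \<in> borel_measurable lborel" by measurable
  show "AE s in lborel. (\<lambda>n. indicator {0..t} s *\<^sub>R H (real (Suc n)) s) \<longlonglongrightarrow> indicator {0..t} s *\<^sub>R Hinf s"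
    using AE_good
  proof (rule eventually_mono)
    fix s assume g: "0 \<le> s \<longrightarrow> good s"
    show "(\<lambda>n. indicator {0..t} s *\<^sub>R H (real (Suc n)) s) \<longlonglongrightarrow> indicator {0..t} s *\<^sub>R Hinf s"
    proof (cases "s \<in> {0..t}")
      case True
      then have "good s" using g by auto
      then show ?thesis using True H_lim by auto
    qed simp
  qed
  show "AE s in lborel. norm (indicator {0..t} s *\<^sub>R H (real (Suc n)) s) \<le> KH * (indicator {0..t} s *\<^sub>R W s)" for n
    using AE_good
  proof (rule eventually_mono)
    fix s assume g: "0 \<le> s \<longrightarrow> good s"
    show "norm (indicator {0..t} s *\<^sub>R H (real (Suc n)) s) \<le> KH * (indicator {0..t} s *\<^sub>R W s)"
    proof (cases "s \<in> {0..t}")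
      case True
      then have "good s" using g by auto
      then show ?thesis using True H_bound[of s "real (Suc n)"] by auto
    qed simp
  qed
qed

lemma f0_int: "integrable lborel (\<lambda>z. f 0 z * Mw z)"
proof -
  have "integrable lborel (\<lambda>z. \<bar>f 0 z\<bar> * Mw z)" using f0 by (simp add: in_L1M_def)
  moreover have "\<bar>f 0 z\<bar> = f 0 z" for z using fnn[of 0] by simp
  ultimately show ?thesis by simp
qed

lemma lim_phiR: assumes t: "t \<ge> 0" and I: "integrable lborel (\<lambda>z. f t z * Mw z)"
  shows "(\<lambda>n. (\<integral>z. phiR (real (Suc n)) z * f t z \<partial>lborel)) \<longlonglongrightarrow> m t"
  unfolding m_def
proof (rule integral_dominated_convergence[where w="\<lambda>z. f t z * Mw z"])
  show "(\<lambda>z. f t z * Mw z) \<in> borel_measurable lborel" by measurable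
  show "\<And>n. (\<lambda>z. phiR (real (Suc n)) z * f t z) \<in> borel_measurable lborel" by measurable
  show "integrable lborel (\<lambda>z. f t z * Mw z)" by (rule I)
  show "AE z in lborel. (\<lambda>n. phiR (real (Suc n)) z * f t z) \<longlonglongrightarrow> f t z * Mw z"
  proof (rule AE_I2)
    fix z
    obtain N :: nat where N: "Mw z \<le> real N" using real_arch_simple by blast
    have "\<forall>n\<ge>N. phiR (real (Suc n)) z * f t z = f t z * Mw z"
      using N by (auto simp: phiR_event)
    then show "(\<lambda>n. phiR (real (Suc n)) z * f t z) \<longlonglongrightarrow> f t z * Mw z"
      by (intro tendsto_eventually) (auto simp: eventually_sequentially)
  qed
  show "\<And>n. AE z in lborel. norm (phiR (real (Suc n)) z * f t z) \<le> f t z * Mw z"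
  proof (intro AE_I2)
    fix n z
    have "norm (phiR (real (Suc n)) z * f t z) = phiR (real (Suc n)) z * f t z"
      using phiR_bounds(1)[of "real (Suc n)" z] fnn[OF t, of z] by simp
    also have "\<dots> \<le> Mw z * f t z"
      using phiR_bounds(2)[of "real (Suc n)" z] fnn[OF t, of z] by (intro mult_right_mono) auto
    finally show "norm (phiR (real (Suc n)) z * f t z) \<le> f t z * Mw z" by (simp add: mult.commute)
  qed
qed

end


context sol begin

lemma main_ident: assumes t: "t \<ge> 0"
  shows "integrable lborel (\<lambda>z. f t z * Mw z) \<and> m t = m 0 + (\<integral>s\<in>{0..t}. Hinf s \<partial>lborel)"
proof -
  define L where "L = m 0 + (\<integral>s\<in>{0..t}. Hinf s \<partial>lborel)"
  have eq: "(\<lambda>n. \<integral>z. phiR (real (Suc n)) z * f t z \<partial>lborel) =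
     (\<lambda>n. (\<integral>z. phiR (real (Suc n)) z * f 0 z \<partial>lborel) + (\<integral>s\<in>{0..t}. H (real (Suc n)) s \<partial>lborel))"
    using ident[OF t] by auto
  have conv: "(\<lambda>n. \<integral>z. phiR (real (Suc n)) z * f t z \<partial>lborel) \<longlonglongrightarrow> L"
    unfolding eq L_def by (intro tendsto_add lim_phiR[OF order_refl f0_int] lim_H[OF t])
  define u where "u n z = indicator {z. Mw z \<le> real n} z * (f t z * Mw z)" for n z
  have fn: "\<And>z. 0 \<le> f t z" using fnn[OF t] .
  have fM: "\<And>z. 0 \<le> f t z * Mw z" using fn wt_bounds(4) by simp
  have intphi: "integrable lborel (\<lambda>z. phiR (real (Suc n)) z * f t z)" for n
  proof (rule Bochner_Integration.integrable_bound)
    show "integrable lborel (\<lambda>z. (2 * real (Suc n)) * f t z)" using fint[OF t] by simp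
    show "(\<lambda>z. phiR (real (Suc n)) z * f t z) \<in> borel_measurable lborel" by measurable
    show "AE z in lborel. norm (phiR (real (Suc n)) z * f t z) \<le> norm ((2 * real (Suc n)) * f t z)"
    proof (rule AE_I2)
      fix z
      have "phiR (real (Suc n)) z * f t z \<le> (2 * real (Suc n)) * f t z"
        using phiR_bounds(3)[of "real (Suc n)" z] fn[of z] by (intro mult_right_mono) auto
      then show "norm (phiR (real (Suc n)) z * f t z) \<le> norm ((2 * real (Suc n)) * f t z)"
        using phiR_bounds(1)[of "real (Suc n)" z] fn[of z] by simp
    qed
  qed
  have intu: "integrable lborel (u n)" for n
  proof (rule Bochner_Integration.integrable_bound)
    show "integrable lborel (\<lambda>z. real n * f t z)" using fint[OF t] by simp
    show "u n \<in> borel_measurable lborel" unfolding u_def[abs_def] by measurable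
    show "AE z in lborel. norm (u n z) \<le> norm (real n * f t z)"
    proof (rule AE_I2)
      fix z
      show "norm (u n z) \<le> norm (real n * f t z)"
      proof (cases "Mw z \<le> real n")
        case True
        then have "f t z * Mw z \<le> f t z * real n" using fn by (intro mult_left_mono) auto
        then show ?thesis using True fM[of z] fn[of z] by (simp add: u_def mult.commute)
      qed (simp add: u_def)
    qed
  qed
  have uphi: "(\<integral>z. u n z \<partial>lborel) \<le> (\<integral>z. phiR (real (Suc n)) z * f t z \<partial>lborel)" for n
  proof (rule integral_mono[OF intu intphi])
    fix z
    show "u n z \<le> phiR (real (Suc n)) z * f t z"
    proof (cases "Mw z \<le> real n")
      case True
      then have "phiR (real (Suc n)) z = Mw z" by (intro phiR_event) auto
      then show ?thesis using True by (simp add: u_def mult.commute)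
    next
      case False
      then show ?thesis using phiR_bounds(1)[of "real (Suc n)" z] fn[of z] by (simp add: u_def)
    qed
  qed
  have umono: "u n z \<le> u (Suc n) z" for n z
    using fM[of z] by (auto simp: u_def indicator_def)
  have "Bseq (\<lambda>n. \<integral>z. phiR (real (Suc n)) z * f t z \<partial>lborel)"
    using conv by (rule convergent_imp_Bseq[OF convergentI])
  then obtain B where B: "\<And>n. norm (\<integral>z. phiR (real (Suc n)) z * f t z \<partial>lborel) \<le> B"
    by (auto simp: Bseq_def)
  have bdd: "bdd_above (range (\<lambda>n. \<integral>z. u n z \<partial>lborel))"
  proof (rule bdd_aboveI2)
    fix n show "(\<integral>z. u n z \<partial>lborel) \<le> B" using uphi[of n] B[of n] by auto
  qed
  have inc: "incseq (\<lambda>n. \<integral>z. u n z \<partial>lborel)"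
    by (rule incseq_SucI, rule integral_mono[OF intu intu]) (rule umono)
  have ulim: "(\<lambda>n. \<integral>z. u n z \<partial>lborel) \<longlonglongrightarrow> (SUP n. \<integral>z. u n z \<partial>lborel)"
    by (rule LIMSEQ_incseq_SUP[OF bdd inc])
  have I: "integrable lborel (\<lambda>z. f t z * Mw z)"
  proof (rule integral_monotone_convergence_nonneg(1)[OF intu _ _ _ ulim])
    show "AE z in lborel. incseq (\<lambda>n. u n z)" by (intro AE_I2 incseq_SucI umono)
    show "\<And>n. AE z in lborel. 0 \<le> u n z" using fM by (auto simp: u_def)
    show "AE z in lborel. (\<lambda>n. u n z) \<longlonglongrightarrow> f t z * Mw z"
    proof (rule AE_I2)
      fix z
      obtain N :: nat where N: "Mw z \<le> real N" using real_arch_simple by blast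
      have "\<forall>n\<ge>N. u n z = f t z * Mw z" using N by (auto simp: u_def)
      then show "(\<lambda>n. u n z) \<longlonglongrightarrow> f t z * Mw z"
        by (intro tendsto_eventually) (auto simp: eventually_sequentially)
    qed
    show "(\<lambda>z. f t z * Mw z) \<in> borel_measurable lborel" by measurable
  qed
  have "m t = L" using LIMSEQ_unique[OF lim_phiR[OF t I] conv] .
  with I show ?thesis by (simp add: L_def)
qed

lemma m_eq: assumes t: "0 \<le> t" shows "m t = m 0 + integral {0..t} Hinf"
proof -
  have "m t = m 0 + (\<integral>s\<in>{0..t}. Hinf s \<partial>lborel)" using main_ident[OF t] by blast
  also have "(\<integral>s\<in>{0..t}. Hinf s \<partial>lborel) = integral {0..t} Hinf"
    by (rule set_borel_integral_eq_integral(2)[OF Hinf_int[OF t]])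
  finally show ?thesis .
qed

lemma Hinf_on: "0 \<le> T \<Longrightarrow> Hinf integrable_on {0..T}"
  using set_borel_integral_eq_integral(1)[OF Hinf_int] by simp

lemma m_cont: assumes T: "T \<ge> 0" shows "continuous_on {0..T} m"
proof -
  have "continuous_on {0..T} (\<lambda>t. m 0 + integral {0..t} Hinf)"
    by (intro continuous_intros indefinite_integral_continuous_1 Hinf_on T)
  then show ?thesis by (rule continuous_on_eq) (metis atLeastAtMost_iff m_eq)
qed

lemma m_bound: assumes t1: "t1 \<ge> 0" shows "m t1 \<le> max (Cone a b lam I0 eps0 / a) (m 0)"
proof (rule ccontr)
  define K where "K = max (Cone a b lam I0 eps0 / a) (m 0)"
  assume "\<not> m t1 \<le> max (Cone a b lam I0 eps0 / a) (m 0)"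
  then have big: "m t1 > K" unfolding K_def by (rule not_le_imp_less)
  define S where "S = {0..t1} \<inter> m -` {..K}"
  have cS: "closed S" unfolding S_def
    by (rule continuous_closed_preimage[OF m_cont[OF t1]]) auto
  have S0: "0 \<in> S" using t1 by (simp add: S_def K_def)
  have bS: "bdd_above S" unfolding S_def by (rule bdd_aboveI[where M=t1]) auto
  define t0 where "t0 = Sup S"
  have t0S: "t0 \<in> S" unfolding t0_def using closed_contains_Sup[OF _ bS cS] S0 by auto
  then have t0: "0 \<le> t0" "t0 \<le> t1" "m t0 \<le> K" by (auto simp: S_def)
  have after: "m s > K" if "t0 < s" "s \<le> t1" for s
  proof (rule ccontr)
    assume "\<not> m s > K"
    then have "s \<in> S" using that t0 by (auto simp: S_def)
    then have "s \<le> t0" unfolding t0_def by (rule cSup_upper[OF _ bS])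
    then show False using that by simp
  qed
  have int1: "Hinf integrable_on {0..t1}" by (rule Hinf_on[OF t1])
  have "m t1 - m t0 = integral {t0..t1} Hinf"
    using m_eq[OF t1] m_eq[OF t0(1)] Henstock_Kurzweil_Integration.integral_combine[OF t0(1) t0(2) int1] by linarith
  also have "integral {t0..t1} Hinf = (\<integral>s\<in>{t0..t1}. Hinf s \<partial>lborel)"
  proof -
    have "set_integrable lborel {t0..t1} Hinf"
      by (rule set_integrable_subset[OF Hinf_int[OF t1]]) (use t0 in auto)
    then show ?thesis by (simp add: set_borel_integral_eq_integral(2))
  qed
  also have "\<dots> \<le> (\<integral>s\<in>{t0..t1}. 0 \<partial>lborel)"
  proof (rule set_integral_mono_AE)
    show "set_integrable lborel {t0..t1} Hinf"
      by (rule set_integrable_subset[OF Hinf_int[OF t1]]) (use t0 in auto)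
    show "set_integrable lborel {t0..t1} (\<lambda>s. 0::real)" by (simp add: set_integrable_def)
    show "AE s\<in>{t0..t1} in lborel. Hinf s \<le> 0"
      using AE_good AE_lborel_singleton[of t0]
    proof (eventually_elim)
      case (elim s)
      show ?case
      proof
        assume s: "s \<in> {t0..t1}"
        then have "good s" "t0 < s" using elim t0 by auto
        have "Hinf s \<le> Cone a b lam I0 eps0 - a * m s" by (rule Hinf_le[OF \<open>good s\<close>])
        moreover have "Cone a b lam I0 eps0 / a \<le> K" by (simp add: K_def)
        then have "Cone a b lam I0 eps0 \<le> a * K" using a by (simp add: field_simps)
        moreover have "a * K < a * m s" using after[OF \<open>t0 < s\<close>] s a by simp
        ultimately show "Hinf s \<le> 0" by linarith
      qed
    qed
  qed
  also have "\<dots> = 0" by simp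
  finally show False using t0(3) big by linarith
qed

lemma final: assumes t: "t \<ge> 0"
  shows "in_L1M (f t) \<and> L1M_norm (f t) \<le> max (Cone a b lam I0 eps0 / a) (L1M_norm (f 0))
    \<and> \<bar>Jf (f t)\<bar> \<le> max (Cone a b lam I0 eps0 / a) (L1M_norm (f 0))"
proof -
  have fn: "\<And>t z. t \<ge> 0 \<Longrightarrow> \<bar>f t z\<bar> = f t z" using fnn by simp
  have L: "\<And>t. t \<ge> 0 \<Longrightarrow> L1M_norm (f t) = m t" unfolding L1M_norm_def m_def using fn by simp
  have I: "integrable lborel (\<lambda>z. f t z * Mw z)" using main_ident[OF t] by simp
  have "in_L1M (f t)" unfolding in_L1M_def using I fn[OF t] by simp
  moreover have "L1M_norm (f t) \<le> max (Cone a b lam I0 eps0 / a) (L1M_norm (f 0))"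
    using m_bound[OF t] L[OF t] L[of 0] by simp
  moreover have "\<bar>Jf (f t)\<bar> \<le> m t"
  proof -
    have "\<bar>Jf (f t)\<bar> = norm (\<integral>z. snd z * f t z \<partial>lborel)" by (simp add: Jf_def)
    also have "\<dots> \<le> (\<integral>z. norm (snd z * f t z) \<partial>lborel)" by (rule integral_norm_bound)
    also have "\<dots> \<le> m t" unfolding m_def
    proof (rule integral_mono'[OF I])
      fix z
      have v: "\<bar>snd z\<bar> \<le> Mw z"
      proof -
        have "0 \<le> (\<bar>snd z\<bar> - 1)^2" by simp
        then have "2 * \<bar>snd z\<bar> \<le> 1 + (snd z)^2" by (simp add: power2_eq_square algebra_simps abs_mult_self_eq)
        moreover have "0 \<le> (fst z)^2" by simp
        ultimately show ?thesis unfolding Mw_def by linarith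
      qed
      show "norm (snd z * f t z) \<le> f t z * Mw z"
        using mult_right_mono[OF v fnn[OF t, of z]] fnn[OF t, of z] by (simp add: abs_mult mult.commute)
      show "0 \<le> f t z * Mw z" using fnn[OF t, of z] wt_bounds(4)[of z] by simp
    qed
    finally show ?thesis .
  qed
  ultimately show ?thesis using m_bound[OF t] L[OF t] L[of 0] by simp
qed

end

theorem lemma3p1:
  fixes a b lam I0 eps0 :: real
  assumes "a > 0" and "b > 0" and "eps0 > 0"
  shows "(\<exists>C0>0. \<forall>eps f. 0 \<le> eps \<and> eps < eps0 \<and> is_solution a b lam I0 eps f
              \<and> in_L1M (f 0) \<longrightarrow>
            (\<forall>t\<ge>0. in_L1M (f t) \<and> L1M_norm (f t) \<le> max C0 (L1M_norm (f 0))))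
       \<and> (\<forall>m. \<exists>C0'>0. \<forall>eps f. 0 \<le> eps \<and> eps < eps0 \<and> is_solution a b lam I0 eps f
              \<and> in_L1M (f 0) \<and> L1M_norm (f 0) = m \<longrightarrow>
            (\<forall>t\<ge>0. \<bar>Jf (f t)\<bar> \<le> C0'))"
proof (intro conjI allI)
  define C0 where "C0 = Cone a b lam I0 eps0 / a"
  have C0: "C0 > 0" unfolding C0_def using Cone_pos[OF assms(1)] assms(1) by simp
  show "\<exists>C0>0. \<forall>eps f. 0 \<le> eps \<and> eps < eps0 \<and> is_solution a b lam I0 eps f
              \<and> in_L1M (f 0) \<longrightarrow>
            (\<forall>t\<ge>0. in_L1M (f t) \<and> L1M_norm (f t) \<le> max C0 (L1M_norm (f 0)))"
  proof (rule exI[of _ C0], intro conjI[OF C0] allI impI)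
    fix eps f t assume H: "0 \<le> eps \<and> eps < eps0 \<and> is_solution a b lam I0 eps f \<and> in_L1M (f 0)" and t: "(t::real) \<ge> 0"
    interpret sol a b lam I0 eps0 eps f using H assms by unfold_locales auto
    show "in_L1M (f t) \<and> L1M_norm (f t) \<le> max C0 (L1M_norm (f 0))"
      using final[OF t] by (simp add: C0_def)
  qed
  fix m :: real
  show "\<exists>C0'>0. \<forall>eps f. 0 \<le> eps \<and> eps < eps0 \<and> is_solution a b lam I0 eps f
              \<and> in_L1M (f 0) \<and> L1M_norm (f 0) = m \<longrightarrow>
            (\<forall>t\<ge>0. \<bar>Jf (f t)\<bar> \<le> C0')"
  proof (intro exI[of _ "max C0 \<bar>m\<bar> + 1"] conjI allI impI)
    show "max C0 \<bar>m\<bar> + 1 > 0" using C0 by simp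
    fix eps f t assume H: "0 \<le> eps \<and> eps < eps0 \<and> is_solution a b lam I0 eps f \<and> in_L1M (f 0) \<and> L1M_norm (f 0) = m" and t: "(t::real) \<ge> 0"
    interpret sol a b lam I0 eps0 eps f using H assms by unfold_locales auto
    have "\<bar>Jf (f t)\<bar> \<le> max C0 m" using final[OF t] H by (simp add: C0_def)
    then show "\<bar>Jf (f t)\<bar> \<le> max C0 \<bar>m\<bar> + 1" by linarith
  qed
qed


end
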